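(* Let $k \ge 2$ and $v$ be integers with $v \equiv 2 \pmod{k-1}$ and $v \ge k(k-1)^2 + 2k$. Then \[ \frac{2v-4}{k-1} \le \beta(2,v,k) \le \frac{2v-4}{k-1} + k^2 - 2. \]
   Context: For integers $v \ge k \ge 2$, a $(v,k)$-packing is a pair $(X,\mathcal{B})$ where $X$ is a set of $v$ points and $\mathcal{B}$ is a set of $k$-subsets of $X$ (blocks) such that every pair of distinct points lies in at most one block. A partial parallel class (PPC) is a set of pairwise disjoint blocks; its size is the number of blocks. A PPC of size $\rho$ is maximum if the packing has no PPC of size $\rho+1$. $\beta(\rho,v,k)$ denotes the maximum number of blocks in a $(v,k)$-packing in which the maximum PPC has size $\rho$. *)

theory Defs
  imports Complex_Main "HOL-Library.Disjoint_Sets"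
begin

definition is_packing :: "nat \<Rightarrow> nat \<Rightarrow> nat set set \<Rightarrow> bool" where
  "is_packing v k \<B> \<longleftrightarrow>
     (\<forall>B\<in>\<B>. B \<subseteq> {..<v} \<and> card B = k) \<and>
     (\<forall>x y. x \<noteq> y \<longrightarrow> card {B\<in>\<B>. x \<in> B \<and> y \<in> B} \<le> 1)"

definition is_ppc :: "nat set set \<Rightarrow> nat set set \<Rightarrow> bool" where
  "is_ppc \<B> P \<longleftrightarrow> P \<subseteq> \<B> \<and> disjoint P"

definition max_ppc_size :: "nat set set \<Rightarrow> nat \<Rightarrow> bool" where
  "max_ppc_size \<B> \<rho> \<longleftrightarrow>
     (\<exists>P. is_ppc \<B> P \<and> card P = \<rho>) \<and> \<not> (\<exists>P. is_ppc \<B> P \<and> card P = \<rho> + 1)"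

definition beta :: "nat \<Rightarrow> nat \<Rightarrow> nat \<Rightarrow> nat" where
  "beta \<rho> v k = Max {card \<B> | \<B>. is_packing v k \<B> \<and> max_ppc_size \<B> \<rho>}"

end

theory Submission
  imports Defs
begin

lemma pack_finite:
  assumes "is_packing v k \<B>" shows "finite \<B>"
proof (rule finite_subset)
  show "\<B> \<subseteq> Pow {..<v}" using assms unfolding is_packing_def by auto
qed auto

lemma pack_block:
  assumes "is_packing v k \<B>" "D \<in> \<B>" shows "finite D" "card D = k" "D \<subseteq> {..<v}"
  using assms unfolding is_packing_def by (auto intro: finite_subset)

lemma pack_linear:
  assumes P: "is_packing v k \<B>" and "C \<in> \<B>" "D \<in> \<B>" "x \<noteq> y" "x \<in> C" "y \<in> C" "x \<in> D" "y \<in> D"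
  shows "C = D"
proof -
  have fin: "finite {B\<in>\<B>. x \<in> B \<and> y \<in> B}" using pack_finite[OF P] by auto
  have "card {B\<in>\<B>. x \<in> B \<and> y \<in> B} \<le> Suc 0" using P assms(4) unfolding is_packing_def by auto
  hence "\<forall>a\<in>{B\<in>\<B>. x \<in> B \<and> y \<in> B}. \<forall>b\<in>{B\<in>\<B>. x \<in> B \<and> y \<in> B}. a = b"
    using card_le_Suc0_iff_eq[OF fin] by blast
  thus ?thesis using assms by blast
qed

lemma star_bound:
  assumes P: "is_packing v k \<B>" and W: "finite W"
    and sub: "\<And>D. D \<in> \<B> \<Longrightarrow> x \<in> D \<Longrightarrow> D - {x} \<subseteq> W"
  shows "(k - 1) * card {D\<in>\<B>. x \<in> D} \<le> card W"
proof -
  let ?S = "{D\<in>\<B>. x \<in> D}"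
  have fin: "finite ?S" using pack_finite[OF P] by auto
  have disj: "\<forall>D\<in>?S. \<forall>E\<in>?S. D \<noteq> E \<longrightarrow> (D - {x}) \<inter> (E - {x}) = {}"
    using pack_linear[OF P] by blast
  have "card (\<Union>D\<in>?S. D - {x}) = (\<Sum>D\<in>?S. card (D - {x}))"
    by (rule card_UN_disjoint) (use fin disj pack_block[OF P] in auto)
  also have "\<dots> = (\<Sum>D\<in>?S. k - 1)"
    by (intro sum.cong) (auto simp: pack_block[OF P])
  also have "\<dots> = (k-1) * card ?S" by simp
  finally have eq: "card (\<Union>D\<in>?S. D - {x}) = (k-1) * card ?S" .
  have "card (\<Union>D\<in>?S. D - {x}) \<le> card W" by (rule card_mono) (use W sub in auto)
  thus ?thesis using eq by simp
qed

lemma intersecting_dich: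
  assumes P: "is_packing v k \<B>" and F: "F \<subseteq> \<B>"
    and int: "\<And>C D. C \<in> F \<Longrightarrow> D \<in> F \<Longrightarrow> C \<noteq> D \<Longrightarrow> C \<inter> D \<noteq> {}"
  shows "(\<exists>x. \<forall>D\<in>F. x \<in> D) \<or> card F \<le> k * (k - 1) + 1"
proof (cases "\<exists>x. \<forall>D\<in>F. x \<in> D")
  case True then show ?thesis by blast
next
  case False
  hence ns: "\<And>x. \<exists>D\<in>F. x \<notin> D" by blast
  from ns obtain C where C: "C \<in> F" by blast
  have finF: "finite F" using pack_finite[OF P] F finite_subset by blast
  have finC: "finite C" "card C = k" using pack_block[OF P] C F by auto
  define Fc where "Fc c = {E\<in>F. c \<in> E \<and> E \<noteq> C}" for c
  have cover: "F \<subseteq> insert C (\<Union>c\<in>C. Fc c)"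
    using int C unfolding Fc_def by blast
  have Fc_le: "card (Fc c) \<le> k - 1" if cC: "c \<in> C" for c
  proof -
    obtain D where D: "D \<in> F" "c \<notin> D" using ns by blast
    have DC: "D \<noteq> C" using D cC by auto
    define f where "f E = (SOME z. z \<in> E \<inter> D)" for E
    have fE: "f E \<in> E \<inter> D" if "E \<in> Fc c" for E
    proof -
      have "E \<noteq> D" using that D unfolding Fc_def by auto
      hence "E \<inter> D \<noteq> {}" using int that D(1) unfolding Fc_def by auto
      thus ?thesis unfolding f_def by (metis (no_types) ex_in_conv someI)
    qed
    have inj: "inj_on f (Fc c)"
    proof (rule inj_onI)
      fix E1 E2 assume E: "E1 \<in> Fc c" "E2 \<in> Fc c" "f E1 = f E2"
      have "c \<noteq> f E1" using fE[OF E(1)] D(2) by auto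
      moreover have "E1 \<in> \<B>" "E2 \<in> \<B>" using E F unfolding Fc_def by auto
      ultimately show "E1 = E2" using fE[OF E(1)] fE[OF E(2)] E pack_linear[OF P, of E1 E2 c "f E1"]
        unfolding Fc_def by auto
    qed
    have img: "f ` Fc c \<subseteq> D - C"
    proof
      fix z assume "z \<in> f ` Fc c"
      then obtain E where E: "E \<in> Fc c" "z = f E" by auto
      have zE: "z \<in> E" "z \<in> D" using fE[OF E(1)] E(2) by auto
      have "z \<notin> C"
      proof
        assume zC: "z \<in> C"
        have "z \<noteq> c" using D(2) zE by auto
        moreover have "E \<in> \<B>" using E F unfolding Fc_def by auto
        ultimately have "E = C" using pack_linear[OF P, of E C c z] E(1) C F zE zC cC
          unfolding Fc_def by auto
        thus False using E(1) unfolding Fc_def by auto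
      qed
      thus "z \<in> D - C" using zE by auto
    qed
    have finD: "finite D" "card D = k" using pack_block[OF P] D F by auto
    have "card (D - C) \<le> k - 1"
    proof -
      have "D \<inter> C \<noteq> {}" using int D(1) C DC by auto
      hence "card (D \<inter> C) \<ge> 1" using finD by (simp add: Suc_le_eq card_gt_0_iff)
      thus ?thesis using card_Diff_subset_Int[of D C] finD by simp
    qed
    thus ?thesis using card_inj_on_le[OF inj img] finD by simp
  qed
  have "card F \<le> card (insert C (\<Union>c\<in>C. Fc c))"
    by (rule card_mono) (use cover finF finC in \<open>auto simp: Fc_def\<close>)
  also have "\<dots> \<le> Suc (card (\<Union>c\<in>C. Fc c))" by (simp add: card_insert_le_m1)
  also have "card (\<Union>c\<in>C. Fc c) \<le> (\<Sum>c\<in>C. card (Fc c))" by (rule card_UN_le) (use finC in auto)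
  also have "\<dots> \<le> (\<Sum>c\<in>C. k - 1)" by (rule sum_mono) (use Fc_le in auto)
  also have "\<dots> = k * (k - 1)" using finC by simp
  finally show ?thesis by simp
qed

lemma AB_count:
  assumes P: "is_packing v k \<B>" and XY: "X \<inter> Y = {}" "finite X" "finite Y"
  shows "card {D\<in>\<B>. D \<inter> X \<noteq> {} \<and> D \<inter> Y \<noteq> {}} \<le> card X * card Y"
proof -
  let ?S = "{D\<in>\<B>. D \<inter> X \<noteq> {} \<and> D \<inter> Y \<noteq> {}}"
  define f where "f D = ((SOME a. a \<in> D \<inter> X), (SOME b. b \<in> D \<inter> Y))" for D
  have fD: "fst (f D) \<in> D \<inter> X" "snd (f D) \<in> D \<inter> Y" if DS: "D \<in> ?S" for D
  proof -
    obtain a b where "a \<in> D \<inter> X" "b \<in> D \<inter> Y" using DS by blast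
    thus "fst (f D) \<in> D \<inter> X" "snd (f D) \<in> D \<inter> Y" unfolding f_def
      using someI[of "\<lambda>a. a \<in> D \<and> a \<in> X" a] someI[of "\<lambda>b. b \<in> D \<and> b \<in> Y" b] by auto
  qed
  have inj: "inj_on f ?S"
  proof (rule inj_onI)
    fix D E assume DE: "D \<in> ?S" "E \<in> ?S" "f D = f E"
    have "fst (f D) \<noteq> snd (f D)" using fD[OF DE(1)] XY(1) by auto
    thus "D = E" using fD[OF DE(1)] fD[OF DE(2)] DE pack_linear[OF P, of D E "fst (f D)" "snd (f D)"]
      by auto
  qed
  have "f ` ?S \<subseteq> X \<times> Y"
  proof
    fix p assume "p \<in> f ` ?S"
    then obtain D where "D \<in> ?S" "p = f D" by blast
    thus "p \<in> X \<times> Y" using fD[of D] by (auto simp: mem_Times_iff)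
  qed
  from card_inj_on_le[OF inj this] show ?thesis using XY by (simp add: card_cartesian_product)
qed


lemma star_single:
  assumes P: "is_packing v k \<B>" and k: "k \<ge> 2" and vm: "v = m * (k-1) + 2" and x: "x < v"
  shows "card {D\<in>\<B>. x \<in> D} \<le> m + 1"
proof -
  have "(k - 1) * card {D\<in>\<B>. x \<in> D} \<le> card ({..<v} - {x})"
    by (rule star_bound[OF P]) (use pack_block[OF P] in auto)
  also have "\<dots> = m * (k-1) + 1" using x vm by simp
  finally have h: "(k - 1) * card {D\<in>\<B>. x \<in> D} \<le> m * (k-1) + 1" .
  show ?thesis
  proof (rule ccontr)
    assume "\<not> ?thesis"
    hence "m + 2 \<le> card {D\<in>\<B>. x \<in> D}" by simp
    hence h2: "(k-1) * (m+2) \<le> (k - 1) * card {D\<in>\<B>. x \<in> D}" by (rule mult_le_mono2)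
    have "(k-1) * (m+2) = m * (k-1) + 2 * (k-1)" by (simp only: add_mult_distrib2 mult.commute)
    thus False using h h2 k by linarith
  qed
qed

lemma star_union:
  assumes P: "is_packing v k \<B>" and k: "k \<ge> 2" and vm: "v = m * (k-1) + 2"
    and xy: "x \<noteq> y" "x < v" "y < v"
  shows "card ({D\<in>\<B>. x \<in> D} \<union> {D\<in>\<B>. y \<in> D}) \<le> 2*m+1"
proof (cases "\<exists>D\<in>\<B>. x \<in> D \<and> y \<in> D")
  case True
  have fin: "finite {D\<in>\<B>. x \<in> D}" "finite {D\<in>\<B>. y \<in> D}" using pack_finite[OF P] by auto
  have "{D\<in>\<B>. x \<in> D} \<inter> {D\<in>\<B>. y \<in> D} \<noteq> {}" using True by auto
  hence "card ({D\<in>\<B>. x \<in> D} \<inter> {D\<in>\<B>. y \<in> D}) \<ge> 1"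
    using fin by (simp add: Suc_le_eq card_gt_0_iff)
  moreover note card_Un_Int[OF fin]
  moreover note star_single[OF P k vm xy(2)] star_single[OF P k vm xy(3)]
  ultimately show ?thesis by linarith
next
  case False
  have c: "card ({..<v} - {x, y}) = m * (k-1)" using xy vm by (simp add: card_Diff_subset)
  have bnd: "card {D\<in>\<B>. z \<in> D} \<le> m" if z: "z = x \<or> z = y" for z
  proof -
    have "(k - 1) * card {D\<in>\<B>. z \<in> D} \<le> card ({..<v} - {x, y})"
      by (rule star_bound[OF P]) (use pack_block[OF P] False z in auto)
    hence h: "(k - 1) * card {D\<in>\<B>. z \<in> D} \<le> (k-1) * m" using c by (simp add: mult.commute)
    show ?thesis using k h by simp
  qed
  have "card ({D\<in>\<B>. x \<in> D} \<union> {D\<in>\<B>. y \<in> D}) \<le> card {D\<in>\<B>. x \<in> D} + card {D\<in>\<B>. y \<in> D}"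
    by (rule card_Un_le)
  thus ?thesis using bnd[of x] bnd[of y] by simp
qed

lemma card_cover2:
  assumes "S \<subseteq> X \<union> Y" "finite X" "finite Y"
  shows "card S \<le> card X + card Y"
proof -
  have "card S \<le> card (X \<union> Y)" using assms by (intro card_mono) auto
  also have "\<dots> \<le> card X + card Y" by (rule card_Un_le)
  finally show ?thesis .
qed

lemma card_cover3:
  assumes "S \<subseteq> X \<union> Y \<union> Z" "finite X" "finite Y" "finite Z"
  shows "card S \<le> card X + card Y + card Z"
proof -
  have "card S \<le> card (X \<union> Y) + card Z" using assms by (intro card_cover2) auto
  also have "card (X \<union> Y) \<le> card X + card Y" by (rule card_Un_le)
  finally show ?thesis by simp
qed

lemma upper_bound:
  assumes k: "k \<ge> 2" and vm: "v = m * (k-1) + 2" and mb: "m \<ge> k*(k-1)+2"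
    and P: "is_packing v k \<B>" and M: "max_ppc_size \<B> 2"
  shows "card \<B> \<le> 2*m + k^2 - 2"
proof -
  obtain Q where Q: "is_ppc \<B> Q" "card Q = 2" using M unfolding max_ppc_size_def by auto
  obtain A B where AB: "Q = {A, B}" "A \<noteq> B" using card_2_iff[THEN iffD1, OF Q(2)] by blast
  have AinB: "A \<in> \<B>" "B \<in> \<B>" using Q(1) AB unfolding is_ppc_def by auto
  have ABd: "A \<inter> B = {}" using Q(1) AB unfolding is_ppc_def pairwise_def disjnt_def by auto
  have no3: False if "C \<in> \<B>" "D \<in> \<B>" "E \<in> \<B>" "C \<inter> D = {}" "C \<inter> E = {}" "D \<inter> E = {}"
     "C \<noteq> D" "C \<noteq> E" "D \<noteq> E" for C D E
  proof -
    have "is_ppc \<B> {C, D, E}" using that unfolding is_ppc_def pairwise_def disjnt_def by auto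
    moreover have "card {C, D, E} = 2 + 1" using that by auto
    ultimately have "\<exists>P. is_ppc \<B> P \<and> card P = 2 + 1" by blast
    thus False using M unfolding max_ppc_size_def by simp
  qed
  have ne: "D \<noteq> {}" if "D \<in> \<B>" for D using pack_block[OF P that] k by auto
  have meet: "D \<inter> A \<noteq> {} \<or> D \<inter> B \<noteq> {}" if D: "D \<in> \<B>" for D
  proof (rule ccontr)
    assume "\<not> ?thesis"
    hence h: "A \<inter> D = {}" "B \<inter> D = {}" by auto
    hence "A \<noteq> D" "B \<noteq> D" using ne[OF D] by auto
    from no3[OF AinB(1) AinB(2) D ABd h AB(2) this] show False .
  qed
  define FA where "FA = {D\<in>\<B>. D \<inter> A = {}}"
  define FB where "FB = {D\<in>\<B>. D \<inter> B = {}}"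
  define ABs where "ABs X Y = {D\<in>\<B>. D \<inter> X \<noteq> {} \<and> D \<inter> Y \<noteq> {}}" for X Y
  have intA: "C \<inter> D \<noteq> {}" if "C \<in> FA" "D \<in> FA" "C \<noteq> D" for C D
  proof
    assume e: "C \<inter> D = {}"
    have h: "C \<in> \<B>" "D \<in> \<B>" "A \<inter> C = {}" "A \<inter> D = {}" using that unfolding FA_def by auto
    have "A \<noteq> C" "A \<noteq> D" using h ne by auto
    from no3[OF AinB(1) h(1,2,3,4) e this that(3)] show False .
  qed
  have intB: "C \<inter> D \<noteq> {}" if "C \<in> FB" "D \<in> FB" "C \<noteq> D" for C D
  proof
    assume e: "C \<inter> D = {}"
    have h: "C \<in> \<B>" "D \<in> \<B>" "B \<inter> C = {}" "B \<inter> D = {}" using that unfolding FB_def by auto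
    have "B \<noteq> C" "B \<noteq> D" using h ne by auto
    from no3[OF AinB(2) h(1,2,3,4) e this that(3)] show False .
  qed
  have BFA: "B \<in> FA" and AFB: "A \<in> FB" using ABd AinB unfolding FA_def FB_def by auto
  have dA: "(\<exists>y. \<forall>D\<in>FA. y \<in> D) \<or> card FA \<le> k * (k - 1) + 1"
    by (rule intersecting_dich[OF P _ intA]) (auto simp: FA_def)
  have dB: "(\<exists>x. \<forall>D\<in>FB. x \<in> D) \<or> card FB \<le> k * (k - 1) + 1"
    by (rule intersecting_dich[OF P _ intB]) (auto simp: FB_def)
  have finA: "finite A" "card A = k" "A \<subseteq> {..<v}" using pack_block[OF P AinB(1)] by auto
  have finB: "finite B" "card B = k" "B \<subseteq> {..<v}" using pack_block[OF P AinB(2)] by auto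
  have fin: "finite \<B>" using pack_finite[OF P] .
  have finS: "finite S" if "S \<subseteq> \<B>" for S using fin that finite_subset by blast
  obtain q where q: "k = Suc q" "q \<ge> 1" proof -
    have "k = Suc (k - 1)" "k - 1 \<ge> 1" using k by auto
    thus thesis using that by blast
  qed
  have mq: "m \<ge> Suc q * q + 2" using mb q by simp
  have goal: "2*m + k^2 - 2 = 2*m + q*q + 2*q - 1" using q by (simp add: power2_eq_square)
  show ?thesis
  proof (cases "\<exists>x. \<forall>D\<in>FB. x \<in> D")
    case True
    then obtain x where x: "\<forall>D\<in>FB. x \<in> D" by blast
    have xA: "x \<in> A" using x AFB by auto
    have cAx: "card (A - {x}) = q" using xA finA q by simp
    show ?thesis
    proof (cases "\<exists>y. \<forall>D\<in>FA. y \<in> D")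
      case True
      then obtain y where y: "\<forall>D\<in>FA. y \<in> D" by blast
      have yB: "y \<in> B" using y BFA by auto
      have cBy: "card (B - {y}) = q" using yB finB q by simp
      have sub: "\<B> \<subseteq> ({D\<in>\<B>. x \<in> D} \<union> {D\<in>\<B>. y \<in> D}) \<union> ABs (A - {x}) (B - {y})"
      proof
        fix D assume D: "D \<in> \<B>"
        show "D \<in> ({D\<in>\<B>. x \<in> D} \<union> {D\<in>\<B>. y \<in> D}) \<union> ABs (A - {x}) (B - {y})"
        proof (cases "D \<inter> A = {} \<or> D \<inter> B = {}")
          case True thus ?thesis using D x y unfolding FA_def FB_def by auto
        next
          case False thus ?thesis using D unfolding ABs_def by auto
        qed
      qed
      have "card \<B> \<le> card ({D\<in>\<B>. x \<in> D} \<union> {D\<in>\<B>. y \<in> D}) + card (ABs (A - {x}) (B - {y}))"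
        by (rule card_cover2[OF sub]) (use fin in \<open>auto simp: ABs_def\<close>)
      moreover have "card ({D\<in>\<B>. x \<in> D} \<union> {D\<in>\<B>. y \<in> D}) \<le> 2*m+1"
        by (rule star_union[OF P k vm]) (use xA yB ABd finA finB in auto)
      moreover have "card (ABs (A - {x}) (B - {y})) \<le> q * q"
        using AB_count[OF P, of "A - {x}" "B - {y}"] ABd finA finB cAx cBy unfolding ABs_def by auto
      ultimately show ?thesis using goal q by linarith
    next
      case False
      hence "card FA \<le> k * (k - 1) + 1" using dA by blast
      hence cFA: "card FA \<le> Suc q * q + 1" using q by simp
      have sub: "\<B> \<subseteq> {D\<in>\<B>. x \<in> D} \<union> FA \<union> ABs (A - {x}) B"
      proof
        fix D assume D: "D \<in> \<B>"
        show "D \<in> {D\<in>\<B>. x \<in> D} \<union> FA \<union> ABs (A - {x}) B"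
        proof (cases "D \<inter> A = {} \<or> D \<inter> B = {} \<or> x \<in> D")
          case True thus ?thesis using D x unfolding FA_def FB_def by auto
        next
          case False thus ?thesis using D unfolding ABs_def by auto
        qed
      qed
      have "card \<B> \<le> card {D\<in>\<B>. x \<in> D} + card FA + card (ABs (A - {x}) B)"
        by (rule card_cover3[OF sub]) (use fin in \<open>auto simp: ABs_def FA_def\<close>)
      moreover have "card {D\<in>\<B>. x \<in> D} \<le> m + 1"
        by (rule star_single[OF P k vm]) (use xA finA in auto)
      moreover have "card (ABs (A - {x}) B) \<le> q * Suc q"
        using AB_count[OF P, of "A - {x}" B] ABd finA finB cAx q unfolding ABs_def by auto
      ultimately show ?thesis using goal q cFA mq by (simp add: algebra_simps)
    qed
  next
    case False
    hence "card FB \<le> k * (k - 1) + 1" using dB by blast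
    hence cFB: "card FB \<le> Suc q * q + 1" using q by simp
    show ?thesis
    proof (cases "\<exists>y. \<forall>D\<in>FA. y \<in> D")
      case True
      then obtain y where y: "\<forall>D\<in>FA. y \<in> D" by blast
      have yB: "y \<in> B" using y BFA by auto
      have cBy: "card (B - {y}) = q" using yB finB q by simp
      have sub: "\<B> \<subseteq> {D\<in>\<B>. y \<in> D} \<union> FB \<union> ABs A (B - {y})"
      proof
        fix D assume D: "D \<in> \<B>"
        show "D \<in> {D\<in>\<B>. y \<in> D} \<union> FB \<union> ABs A (B - {y})"
        proof (cases "D \<inter> A = {} \<or> D \<inter> B = {} \<or> y \<in> D")
          case True thus ?thesis using D y unfolding FA_def FB_def by auto
        next
          case False thus ?thesis using D unfolding ABs_def by auto
        qed
      qed
      have "card \<B> \<le> card {D\<in>\<B>. y \<in> D} + card FB + card (ABs A (B - {y}))"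
        by (rule card_cover3[OF sub]) (use fin in \<open>auto simp: ABs_def FB_def\<close>)
      moreover have "card {D\<in>\<B>. y \<in> D} \<le> m + 1"
        by (rule star_single[OF P k vm]) (use yB finB in auto)
      moreover have "card (ABs A (B - {y})) \<le> Suc q * q"
        using AB_count[OF P, of A "B - {y}"] ABd finA finB cBy q unfolding ABs_def by auto
      ultimately show ?thesis using goal q cFB mq by (simp add: algebra_simps)
    next
      case False
      hence "card FA \<le> k * (k - 1) + 1" using dA by blast
      hence cFA: "card FA \<le> Suc q * q + 1" using q by simp
      have sub: "\<B> \<subseteq> FA \<union> FB \<union> ABs A B"
        unfolding FA_def FB_def ABs_def by auto
      have "card \<B> \<le> card FA + card FB + card (ABs A B)"
        by (rule card_cover3[OF sub]) (use fin in \<open>auto simp: ABs_def FA_def FB_def\<close>)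
      moreover have "card (ABs A B) \<le> Suc q * Suc q"
        using AB_count[OF P, of A B] ABd finA finB q unfolding ABs_def by auto
      ultimately show ?thesis using goal q cFB cFA mq by (simp add: algebra_simps)
    qed
  qed
qed


definition pt :: "nat \<Rightarrow> nat \<Rightarrow> nat \<Rightarrow> nat" where "pt q i t = 2 + i * q + t"
definition Gblk :: "nat \<Rightarrow> nat \<Rightarrow> nat set" where
  "Gblk q i = insert 0 ((\<lambda>t. pt q i t) ` {..<q})"
definition Hblk :: "nat \<Rightarrow> nat \<Rightarrow> nat \<Rightarrow> nat set" where
  "Hblk q m j = insert 1 ((\<lambda>t. pt q ((j + t) mod m) t) ` {..<q})"
definition constr :: "nat \<Rightarrow> nat \<Rightarrow> nat set set" where
  "constr q m = (Gblk q ` {..<m}) \<union> (Hblk q m ` {..<m})"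

lemma pt_inj:
  assumes "t < q" "t' < q" "pt q i t = pt q i' t'"
  shows "i = i' \<and> t = t'"
proof -
  have e: "i * q + t = i' * q + t'" using assms(3) unfolding pt_def by simp
  have "(i * q + t) div q = i" "(i' * q + t') div q = i'" using assms(1,2) by auto
  moreover have "(i * q + t) mod q = t" "(i' * q + t') mod q = t'" using assms(1,2) by auto
  moreover have "(i * q + t) div q = (i' * q + t') div q" "(i * q + t) mod q = (i' * q + t') mod q"
    using e by simp_all
  ultimately show ?thesis by simp
qed

lemma pt_ge: "pt q i t \<ge> 2" unfolding pt_def by simp

lemma pt_lt:
  assumes "i < m" "t < q" shows "pt q i t < m * q + 2"
proof -
  have "i * q + t < i * q + q" using assms by simp
  also have "\<dots> = (i + 1) * q" by simp
  also have "\<dots> \<le> m * q" using assms(1) by (intro mult_le_mono1) simp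
  finally show ?thesis unfolding pt_def by simp
qed

lemma mod_cancel_aux:
  fixes a c m :: nat
  assumes "a < m" shows "((a + c) mod m + (m - c mod m)) mod m = a"
proof -
  define d where "d = c div m"
  define r where "r = c mod m"
  have e: "c = m * d + r" unfolding d_def r_def by simp
  have l: "r < m" unfolding r_def using assms by simp
  have s: "(a + c) + (m - r) = a + m * d + m" unfolding e using l by simp
  have "((a + c) mod m + (m - c mod m)) mod m = ((a + c) + (m - r)) mod m"
    unfolding r_def by (rule mod_add_left_eq)
  also have "\<dots> = (a + m * d + m) mod m" unfolding s ..
  also have "\<dots> = a" using assms by simp
  finally show ?thesis .
qed

lemma mod_cancel:
  fixes a b c m :: nat
  assumes "a < m" "b < m" "(a + c) mod m = (b + c) mod m" shows "a = b"
proof -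
  have h1: "((a + c) mod m + (m - c mod m)) mod m = a" by (rule mod_cancel_aux[OF assms(1)])
  have h2: "((b + c) mod m + (m - c mod m)) mod m = b" by (rule mod_cancel_aux[OF assms(2)])
  have "a = ((a + c) mod m + (m - c mod m)) mod m" using h1 by (rule sym)
  also have "\<dots> = ((b + c) mod m + (m - c mod m)) mod m" unfolding assms(3) ..
  also have "\<dots> = b" by (rule h2)
  finally show ?thesis .
qed

lemma memG: "x \<in> Gblk q i \<longleftrightarrow> x = 0 \<or> (\<exists>t<q. x = pt q i t)"
  unfolding Gblk_def by auto

lemma memH: "x \<in> Hblk q m j \<longleftrightarrow> x = 1 \<or> (\<exists>t<q. x = pt q ((j + t) mod m) t)"
  unfolding Hblk_def by auto

lemma zero_notin_H: "0 \<notin> Hblk q m j" unfolding memH pt_def by auto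

lemma one_notin_G: "1 \<notin> Gblk q i" unfolding memG pt_def by auto

lemma GH_inter:
  assumes qm: "q \<le> m" and x: "x \<in> Gblk q i" "x \<in> Hblk q m j" and y: "y \<in> Gblk q i" "y \<in> Hblk q m j"
  shows "x = y"
proof -
  have x0: "x \<noteq> 0"
  proof
    assume "x = 0"
    with x(2) zero_notin_H[of q m j] show False by simp
  qed
  have x1: "x \<noteq> 1"
  proof
    assume "x = 1"
    with x(1) one_notin_G[of q i] show False by simp
  qed
  have y0: "y \<noteq> 0"
  proof
    assume "y = 0"
    with y(2) zero_notin_H[of q m j] show False by simp
  qed
  have y1: "y \<noteq> 1"
  proof
    assume "y = 1"
    with y(1) one_notin_G[of q i] show False by simp
  qed
  obtain t1 s1 where t1: "t1 < q" "x = pt q i t1" "s1 < q" "x = pt q ((j + s1) mod m) s1"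
    using x x0 x1 unfolding memG memH by blast
  obtain t2 s2 where t2: "t2 < q" "y = pt q i t2" "s2 < q" "y = pt q ((j + s2) mod m) s2"
    using y y0 y1 unfolding memG memH by blast
  have "pt q i t1 = pt q ((j + s1) mod m) s1" using t1 by simp
  hence a: "i = (j + s1) mod m" "t1 = s1" using pt_inj[of t1 q s1 i "(j + s1) mod m"] t1 by auto
  have "pt q i t2 = pt q ((j + s2) mod m) s2" using t2 by simp
  hence b: "i = (j + s2) mod m" "t2 = s2" using pt_inj[of t2 q s2 i "(j + s2) mod m"] t2 by auto
  have "(s1 + j) mod m = (s2 + j) mod m" using a b by (simp add: add.commute)
  hence "s1 = s2" using mod_cancel[of s1 m s2 j] t1 t2 qm by simp
  thus ?thesis using a b t1 t2 by simp
qed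

lemma constr_linear:
  assumes qm: "q \<le> m" and B1: "B1 \<in> constr q m" and B2: "B2 \<in> constr q m" and xy: "x \<noteq> y"
    and x: "x \<in> B1" "x \<in> B2" and y: "y \<in> B1" "y \<in> B2"
  shows "B1 = B2"
proof -
  have "x \<noteq> 0 \<or> y \<noteq> 0" using xy by auto
  then obtain z where z: "z \<in> B1" "z \<in> B2" "z \<noteq> 0" using x y by blast
  have "x \<noteq> 1 \<or> y \<noteq> 1" using xy by auto
  then obtain w where w: "w \<in> B1" "w \<in> B2" "w \<noteq> 1" using x y by blast
  show ?thesis
  proof (cases "B1 \<in> Gblk q ` {..<m}")
    case G1: True
    then obtain i where i: "B1 = Gblk q i" by blast
    show ?thesis
    proof (cases "B2 \<in> Gblk q ` {..<m}")
      case True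
      then obtain i' where i': "B2 = Gblk q i'" by blast
      have "z \<in> Gblk q i" "z \<in> Gblk q i'" using z i i' by simp_all
      then obtain t t' where tt: "t < q" "z = pt q i t" "t' < q" "z = pt q i' t'" using z(3) unfolding memG by blast
      have "pt q i t = pt q i' t'" using tt by simp
      hence "i = i'" using pt_inj[OF tt(1) tt(3)] by blast
      thus ?thesis using i i' by simp
    next
      case False
      then obtain j where j: "B2 = Hblk q m j" using B2 unfolding constr_def by blast
      have "x = y" using GH_inter[OF qm, of x i j y] x y i j by simp
      thus ?thesis using xy by simp
    qed
  next
    case False
    then obtain j where j: "B1 = Hblk q m j" "j < m" using B1 unfolding constr_def by blast
    show ?thesis
    proof (cases "B2 \<in> Gblk q ` {..<m}")
      case True
      then obtain i where i: "B2 = Gblk q i" by blast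
      have "x = y" using GH_inter[OF qm, of x i j y] x y i j by simp
      thus ?thesis using xy by simp
    next
      case False
      then obtain j' where j': "B2 = Hblk q m j'" "j' < m" using B2 unfolding constr_def by blast
      have "w \<in> Hblk q m j" "w \<in> Hblk q m j'" using w j j' by simp_all
      then obtain t t' where tt: "t < q" "w = pt q ((j + t) mod m) t" "t' < q" "w = pt q ((j' + t') mod m) t'"
        using w(3) unfolding memH by blast
      have "pt q ((j + t) mod m) t = pt q ((j' + t') mod m) t'" using tt by simp
      hence "(j + t) mod m = (j' + t') mod m" "t = t'" using pt_inj[OF tt(1) tt(3)] by blast+
      hence "j = j'" using mod_cancel[of j m j' t] j j' by simp
      thus ?thesis using j j' by simp
    qed
  qed
qed

lemma card_G: "card (Gblk q i) = Suc q"
proof -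
  have "inj_on (\<lambda>t. pt q i t) {..<q}"
  proof (rule inj_onI)
    fix a b assume "a \<in> {..<q}" "b \<in> {..<q}" "pt q i a = pt q i b"
    thus "a = b" using pt_inj[of a q b i i] by simp
  qed
  hence "card ((\<lambda>t. pt q i t) ` {..<q}) = q" by (simp add: card_image)
  moreover have "0 \<notin> (\<lambda>t. pt q i t) ` {..<q}" using pt_ge[of q i] by (auto simp: pt_def)
  ultimately show ?thesis unfolding Gblk_def by simp
qed

lemma card_H: "card (Hblk q m j) = Suc q"
proof -
  have "inj_on (\<lambda>t. pt q ((j + t) mod m) t) {..<q}"
  proof (rule inj_onI)
    fix a b assume "a \<in> {..<q}" "b \<in> {..<q}" "pt q ((j + a) mod m) a = pt q ((j + b) mod m) b"
    thus "a = b" using pt_inj[of a q b "(j + a) mod m" "(j + b) mod m"] by simp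
  qed
  hence "card ((\<lambda>t. pt q ((j + t) mod m) t) ` {..<q}) = q" by (simp add: card_image)
  moreover have "1 \<notin> (\<lambda>t. pt q ((j + t) mod m) t) ` {..<q}" by (auto simp: pt_def)
  ultimately show ?thesis unfolding Hblk_def by simp
qed

lemma constr_packing:
  assumes q: "q \<ge> 1" and qm: "q < m"
  shows "is_packing (m * q + 2) (Suc q) (constr q m)"
  unfolding is_packing_def
proof (intro conjI allI impI ballI)
  fix B assume B: "B \<in> constr q m"
  show "card B = Suc q" using B card_G card_H unfolding constr_def by auto
  show "B \<subseteq> {..<m * q + 2}"
  proof
    fix x assume x: "x \<in> B"
    show "x \<in> {..<m * q + 2}"
    proof (cases "B \<in> Gblk q ` {..<m}")
      case True
      then obtain i where "B = Gblk q i" "i < m" by blast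
      thus ?thesis using x pt_lt[of i m] by (auto simp: memG)
    next
      case False
      then obtain j where "B = Hblk q m j" using B unfolding constr_def by blast
      moreover have "(j + t) mod m < m" for t using qm by simp
      ultimately show ?thesis using x pt_lt[of _ m] by (auto simp: memH)
    qed
  qed
next
  fix x y :: nat assume xy: "x \<noteq> y"
  have fin: "finite {B \<in> constr q m. x \<in> B \<and> y \<in> B}" unfolding constr_def by simp
  show "card {B \<in> constr q m. x \<in> B \<and> y \<in> B} \<le> 1"
    using card_le_Suc0_iff_eq[OF fin] constr_linear[of q m _ _ x y] qm xy by auto
qed

lemma constr_card:
  assumes q: "q \<ge> 1" shows "card (constr q m) = 2 * m"
proof -
  have p0: "pt q i 0 \<in> Gblk q i" for i using q unfolding memG by (intro disjI2 exI[of _ 0]) auto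
  have injG: "inj_on (Gblk q) {..<m}"
  proof (rule inj_onI)
    fix i i' assume "Gblk q i = Gblk q i'"
    hence "pt q i 0 \<in> Gblk q i'" by (metis p0)
    then obtain t where "t < q" "pt q i 0 = pt q i' t" using pt_ge[of q i 0] unfolding memG by auto
    thus "i = i'" using pt_inj[of 0 q t i i'] q by simp
  qed
  have h0: "pt q j 0 \<in> Hblk q m j" if "j < m" for j using q that unfolding memH by (intro disjI2 exI[of _ 0]) auto
  have injH: "inj_on (Hblk q m) {..<m}"
  proof (rule inj_onI)
    fix j j' assume jj: "j \<in> {..<m}" "j' \<in> {..<m}" "Hblk q m j = Hblk q m j'"
    have "pt q j 0 \<in> Hblk q m j" using h0 jj(1) by simp
    hence "pt q j 0 \<in> Hblk q m j'" using jj(3) by simp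
    then obtain t where t: "t < q" "pt q j 0 = pt q ((j' + t) mod m) t"
      using pt_ge[of q j 0] unfolding memH by auto
    hence "j = (j' + t) mod m" "t = 0" using pt_inj[of 0 q t j] q by auto
    thus "j = j'" using jj by simp
  qed
  have disj: "Gblk q ` {..<m} \<inter> Hblk q m ` {..<m} = {}"
    using zero_notin_H[of q m] unfolding Gblk_def by auto
  have "card (constr q m) = card (Gblk q ` {..<m}) + card (Hblk q m ` {..<m})"
    unfolding constr_def by (rule card_Un_disjoint) (use disj in auto)
  also have "\<dots> = 2 * m" using card_image[OF injG] card_image[OF injH] by simp
  finally show ?thesis .
qed

lemma constr_ppc:
  assumes q: "q \<ge> 1" and qm: "q < m"
  shows "max_ppc_size (constr q m) 2"
  unfolding max_ppc_size_def
proof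
  let ?G = "Gblk q 0" and ?H = "Hblk q m 1"
  have GH: "?G \<noteq> ?H" using zero_notin_H[of q m 1] unfolding Gblk_def by auto
  have dis: "?G \<inter> ?H = {}"
  proof (rule ccontr)
    assume "?G \<inter> ?H \<noteq> {}"
    then obtain x where x: "x \<in> ?G" "x \<in> ?H" by blast
    have "x \<noteq> 0"
  proof
    assume "x = 0"
    with x(2) zero_notin_H[of q m 1] show False by simp
  qed
    moreover have "x \<noteq> 1"
  proof
    assume "x = 1"
    with x(1) one_notin_G[of q 0] show False by simp
  qed
    ultimately obtain t s where ts: "t < q" "x = pt q 0 t" "s < q" "x = pt q ((1 + s) mod m) s"
      using x unfolding memG memH by blast
    have "pt q 0 t = pt q ((1 + s) mod m) s" using ts by simp
    hence "0 = (1 + s) mod m" "t = s" using pt_inj[OF ts(1) ts(3)] by blast+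
    moreover have "(1 + s) mod m = 1 + s" using ts(3) qm by simp
    ultimately show False by simp
  qed
  show "\<exists>P. is_ppc (constr q m) P \<and> card P = 2"
  proof (intro exI conjI)
    have "?G \<in> constr q m" "?H \<in> constr q m" using qm q unfolding constr_def by auto
    moreover have "?H \<inter> ?G = {}" using dis by blast
    ultimately show "is_ppc (constr q m) {?G, ?H}"
      unfolding is_ppc_def pairwise_def disjnt_def using dis by auto
    show "card {?G, ?H} = 2" using GH by simp
  qed
  show "\<not> (\<exists>P. is_ppc (constr q m) P \<and> card P = 2 + 1)"
  proof
    assume "\<exists>P. is_ppc (constr q m) P \<and> card P = 2 + 1"
    then obtain P where P: "P \<subseteq> constr q m" "pairwise disjnt P" "card P = 3"
      unfolding is_ppc_def by auto
    have finP: "finite P" by (rule card_ge_0_finite) (simp add: P(3))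
    have cover: "P \<subseteq> {B\<in>P. 0 \<in> B} \<union> {B\<in>P. 1 \<in> B}"
    proof
      fix B assume "B \<in> P"
      hence "B \<in> constr q m" using P(1) by blast
      hence "0 \<in> B \<or> 1 \<in> B" unfolding constr_def by (auto simp: memG memH)
      thus "B \<in> {B\<in>P. 0 \<in> B} \<union> {B\<in>P. 1 \<in> B}" using \<open>B \<in> P\<close> by blast
    qed
    have le1: "card {B\<in>P. z \<in> B} \<le> 1" for z
    proof -
      have "\<forall>a\<in>{B\<in>P. z \<in> B}. \<forall>b\<in>{B\<in>P. z \<in> B}. a = b"
        using P(2) unfolding pairwise_def disjnt_def by blast
      thus ?thesis using card_le_Suc0_iff_eq[of "{B\<in>P. z \<in> B}"] finP by simp
    qed
    have "card P \<le> card {B\<in>P. 0 \<in> B} + card {B\<in>P. 1 \<in> B}"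
      by (rule card_cover2[OF cover]) (use finP in auto)
    thus False using le1[of 0] le1[of 1] P(3) by simp
  qed
qed


theorem theorem5p6:
  fixes v k :: nat
  assumes "k \<ge> 2"
    and "v mod (k - 1) = 2 mod (k - 1)"
    and "v \<ge> k * (k - 1)^2 + 2 * k"
  shows "(2 * real v - 4) / (real k - 1) \<le> real (beta 2 v k)
       \<and> real (beta 2 v k) \<le> (2 * real v - 4) / (real k - 1) + (real k)^2 - 2"
proof -
  define q where "q = k - 1"
  have q1: "q \<ge> 1" and kq: "k = Suc q" using assms(1) unfolding q_def by auto
  have v2: "2 \<le> v" using assms(1,3) by simp
  have "q dvd v - 2" using assms(2) mod_eq_dvd_iff_nat[OF v2, of q] unfolding q_def by simp
  define m where "m = (v - 2) div q"
  have vm: "v = m * q + 2" using \<open>q dvd v - 2\<close> v2 unfolding m_def by auto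
  have vm': "v = m * (k - 1) + 2" using vm unfolding q_def .
  have "((Suc q) * q + 2) * q + 2 \<le> m * q + 2"
    using assms(3) vm kq by (simp add: power2_eq_square algebra_simps)
  hence h: "((Suc q) * q + 2) * q \<le> m * q" by linarith
  have mq: "(Suc q) * q + 2 \<le> m" using mult_le_cancel2[THEN iffD1, OF h] q1 by simp
  have mb: "m \<ge> k * (k - 1) + 2" using mq kq by simp
  have qm: "q < m" using mq q1 by (simp add: algebra_simps)
  define S where "S = {card \<B> | \<B>. is_packing v k \<B> \<and> max_ppc_size \<B> 2}"
  have bS: "beta 2 v k = Max S" unfolding beta_def S_def ..
  have low: "2 * m \<in> S"
  proof -
    have "is_packing v k (constr q m)" using constr_packing[OF q1 qm] vm kq by simp
    moreover have "max_ppc_size (constr q m) 2" by (rule constr_ppc[OF q1 qm])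
    ultimately show ?thesis unfolding S_def using constr_card[OF q1, of m] by force
  qed
  have up: "s \<le> 2 * m + k^2 - 2" if "s \<in> S" for s
    using that upper_bound[OF assms(1) vm' mb] unfolding S_def by auto
  have finS: "finite S" by (rule finite_subset[of _ "{..2 * m + k^2 - 2}"]) (use up in auto)
  have S1: "2 * m \<le> Max S" using Max_ge[OF finS low] .
  have S2: "Max S \<le> 2 * m + k^2 - 2" using Max_le_iff[OF finS] low up by blast
  have k2: "k^2 \<ge> 2" using assms(1) by (simp add: power2_eq_square) (metis mult_le_mono le_trans one_le_numeral mult_2 add_leE)
  have e1: "(2 * real v - 4) / (real k - 1) = 2 * real m"
  proof -
    have "real k - 1 = real q" using kq by simp
    moreover have "2 * real v - 4 = 2 * real m * real q" using vm by simp
    ultimately show ?thesis using q1 by simp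
  qed
  have "real (beta 2 v k) \<le> real (2 * m + k^2 - 2)" using S2 bS by simp
  also have "\<dots> = 2 * real m + (real k)^2 - 2" using k2 by (simp add: of_nat_diff)
  finally have r2: "real (beta 2 v k) \<le> 2 * real m + (real k)^2 - 2" .
  have r1: "2 * real m \<le> real (beta 2 v k)" using S1 bS by simp
  show ?thesis using r1 r2 e1 by simp
qed

end
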